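(* In the setting of the context, for every fixed $i\in\{1,\dots,n\}$, $$\prod_{(x,y)\in\mathfrak{X}}\frac{\max\big(1,|\beta_i(x,y)-m(x,y)|\big)}{e^6s(ns)^{2s/n}\,h^{1/n}\,(2Y_S+7/2)}\le 1.$$
   Context: Setting: $n\ge3$; $F(x,y)=\sum_{i=0}^s a_ix^{n_i}y^{n-n_i}\in\mathbb{Z}[x,y]$ of degree $n$, irreducible over $\mathbb{Q}$, all $a_i\neq0$, $0=n_0<\dots<n_s=n$, discriminant $D$. $R=n^{800\log^2n}$; $h$ a positive integer and $\kappa>1$ an integer with $h\le |D|^{\frac{1}{2(n-1)(2+1/\kappa)}}/\big((3R)^{n/2}(ns)^{2s+n}\big)$; $Y_S=e^6s(ns)^{2s/n}h^{1/(\kappa n)}$. Write $F(x,y)=a\prod_{i=1}^n(x-\alpha_iy)$ ($\alpha_i$ the roots of $F(x,1)$) and $L_i(x,y)=x-\alpha_iy$. A "solution" is a pair $(x,y)\in\mathbb{Z}^2$ with $\gcd(x,y)=1$ and $1\le|F(x,y)|\le h$, with $(x,y)$ and $(-x,-y)$ identified. Assume there is a solution with $0\le y\le Y_S$, and fix one such, $(x_0,y_0)$, with $y_0\ge0$ minimal. Index the roots so that $|L_1(x_0,y_0)|=\min_i|L_i(x_0,y_0)|$. There is at most one solution $(x^*,y^* )$ with $0<y^*\le Y_S$ and $|L_1(x^*,y^* )|<1/(2Y_S)$; let $\mathbf{A}=\{(x_0,y_0)\}$ together with $(x^*,y^* )$ if it exists. For a primitive $(x,y)$ choose integers $x',y'$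 with $x'y-xy'=1$ and set $\beta_j(x,y)=-L_j(x',y')/L_j(x,y)$ (so that $F(ux+wx',uy+wy')=F(x,y)\prod_j(u-\beta_j(x,y)w)$), and let $m(x,y)$ be an integer with $|\mathrm{Re}\,\beta_1(x,y)-m(x,y)|\le 1/2$. For $1\le i\le n$, $\mathfrak{X}_i$ is the set of solutions $(x,y)\notin\mathbf{A}$ with $1\le y\le Y_S$ and $|L_i(x,y)|\le\frac{1}{2y}$. For each nonempty $\mathfrak{X}_i$ let $(x^{(i)},y^{(i)})$ be an element of $\mathfrak{X}_i$ with largest $y$. $\mathfrak{X}$ is the set of solutions $(x,y)\notin\mathbf{A}$ with $1\le y\le Y_S$, with all the elements $(x^{(1)},y^{(1)}),\dots,(x^{(n)},y^{(n)})$ removed. *)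

theory Defs
  imports "HOL-Analysis.Analysis" "HOL-Computational_Algebra.Polynomial" "HOL-Computational_Algebra.Polynomial_Factorial"
begin

definition bform :: "int poly \<Rightarrow> int \<Rightarrow> int \<Rightarrow> int" where
  "bform f x y = (\<Sum>k\<le>degree f. coeff f k * x ^ k * y ^ (degree f - k))"

definition Lf :: "complex \<Rightarrow> int \<Rightarrow> int \<Rightarrow> complex" where
  "Lf al x y = of_int x - al * of_int y"

definition beta :: "complex \<Rightarrow> int \<Rightarrow> int \<Rightarrow> int \<Rightarrow> int \<Rightarrow> complex" where
  "beta al x y x' y' = - Lf al x' y' / Lf al x y"

definition form_disc :: "int \<Rightarrow> nat \<Rightarrow> (nat \<Rightarrow> complex) \<Rightarrow> complex" where
  "form_disc a n al = of_int a ^ (2 * n - 2) * (\<Prod>i\<in>{1..n}. \<Prod>j\<in>{i<..n}. (al i - al j) ^ 2)"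

definition is_solution :: "int poly \<Rightarrow> nat \<Rightarrow> int \<Rightarrow> int \<Rightarrow> bool" where
  "is_solution f h x y \<longleftrightarrow> coprime x y \<and> 1 \<le> \<bar>bform f x y\<bar> \<and> \<bar>bform f x y\<bar> \<le> int h"

end

theory Submission
  imports Defs
begin


lemma beta_eq:
  fixes x y x' y' :: int
  assumes "x' * y - x * y' = 1" "y \<noteq> 0" "Lf a x y \<noteq> 0"
  shows "beta a x y x' y' = - (of_int y' / of_int y) - 1 / (of_int y * Lf a x y)"
proof -
  have e: "of_int x' * of_int y - of_int x * of_int y' = (1::complex)"
    using assms(1) by (metis of_int_1 of_int_diff of_int_mult)
  have "Lf a x' y' * of_int y = of_int y' * Lf a x y + 1"
    unfolding Lf_def using e by (simp add: algebra_simps)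
  hence "Lf a x' y' = (of_int y' * Lf a x y + 1) / of_int y" using assms(2) by (simp add: field_simps)
  thus ?thesis using assms(2,3) unfolding beta_def by (simp add: field_simps)
qed

lemma L_gap:
  fixes x y u v :: int and a :: complex and Y :: real
  assumes cxy: "coprime x y" and cuv: "coprime u v" and y1: "1 \<le> y" and v1: "1 \<le> v"
    and yv: "y \<le> v" and vY: "real_of_int v \<le> Y" and ne: "(x, y) \<noteq> (u, v)"
    and Lu: "cmod (Lf a u v) \<le> 1 / (2 * real_of_int v)"
  shows "1 / (2 * Y) \<le> cmod (Lf a x y)"
proof -
  define d where "d = x * v - u * y"
  have "d \<noteq> 0"
  proof
    assume "d = 0"
    hence eq: "x * v = u * y" unfolding d_def by simp
    have "y dvd x * v" using eq by simp
    hence "y dvd v" using cxy by (metis coprime_commute coprime_dvd_mult_right_iff)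
    have "v dvd u * y" using eq by (metis dvd_triv_right)
    hence "v dvd y" using cuv by (metis coprime_commute coprime_dvd_mult_right_iff)
    have "y = v" using \<open>y dvd v\<close> \<open>v dvd y\<close> y1 v1 by (simp add: zdvd_antisym_nonneg)
    hence "x = u" using eq y1 by simp
    thus False using ne \<open>y = v\<close> by simp
  qed
  hence d1: "1 \<le> \<bar>real_of_int d\<bar>" by linarith
  have "(of_int d :: complex) = Lf a x y * of_int v - Lf a u v * of_int y"
    unfolding d_def Lf_def by (simp add: algebra_simps)
  hence "cmod (of_int d) \<le> cmod (Lf a x y) * real_of_int v + cmod (Lf a u v) * real_of_int y"
    using y1 v1 by (metis norm_triangle_ineq4 norm_mult norm_of_int abs_of_nonneg of_int_0_le_iff
          order_trans zero_le_one dual_order.trans)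
  hence "1 \<le> cmod (Lf a x y) * real_of_int v + cmod (Lf a u v) * real_of_int y"
    using d1 by (metis norm_of_int order_trans)
  moreover have "cmod (Lf a u v) * real_of_int y \<le> 1/2"
  proof -
    have "cmod (Lf a u v) * real_of_int y \<le> 1 / (2 * real_of_int v) * real_of_int v"
      using Lu yv y1 by (intro mult_mono) auto
    thus ?thesis using v1 by simp
  qed
  ultimately have "1/2 \<le> cmod (Lf a x y) * real_of_int v" by linarith
  hence "1 / (2 * real_of_int v) \<le> cmod (Lf a x y)" using v1 by (simp add: field_simps)
  moreover have "1 / (2 * Y) \<le> 1 / (2 * real_of_int v)" using v1 vY by (simp add: frac_le)
  ultimately show ?thesis by linarith
qed

lemma beta_bound:
  fixes t m y Y :: real and L1 Li :: complex
  assumes y1: "1 \<le> y" and Y: "y \<le> Y"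
    and L1: "1 / (2 * Y) \<le> cmod L1" and Li: "1 / (2 * Y) \<le> cmod Li"
    and m: "\<bar>Re (of_real t - 1 / (of_real y * L1)) - m\<bar> \<le> 1/2"
  shows "cmod (of_real t - 1 / (of_real y * Li) - of_real m) \<le> 1/2 + 4 * Y"
proof -
  have Y0: "Y > 0" using y1 Y by linarith
  have b: "cmod (1 / (of_real y * L)) \<le> 2 * Y" if "1 / (2 * Y) \<le> cmod L" for L :: complex
  proof -
    have L0: "cmod L > 0" using that Y0 by (smt (verit) divide_pos_pos)
    have "cmod (1 / (of_real y * L)) = 1 / (y * cmod L)" using y1 by (simp add: norm_divide norm_mult)
    also have "\<dots> \<le> 1 / cmod L" using y1 L0
      by (simp add: divide_simps)
    also have "\<dots> \<le> 2 * Y" using that L0 Y0 by (simp add: field_simps)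
    finally show ?thesis .
  qed
  have "\<bar>t - m\<bar> \<le> 1/2 + 2 * Y"
  proof -
    have "\<bar>Re (1 / (of_real y * L1))\<bar> \<le> 2 * Y" using b[OF L1] abs_Re_le_cmod order_trans by blast
    moreover have "Re (of_real t - 1 / (of_real y * L1)) = t - Re (1 / (of_real y * L1))" by simp
    ultimately show ?thesis using m by linarith
  qed
  hence "cmod (of_real (t - m) :: complex) \<le> 1/2 + 2 * Y" by (simp only: norm_of_real)
  moreover have "cmod (of_real t - 1 / (of_real y * Li) - of_real m)
      \<le> cmod (of_real (t - m) :: complex) + cmod (1 / (of_real y * Li))"
  proof -
    have "of_real t - 1 / (of_real y * Li) - of_real m = (of_real (t - m) :: complex) - 1 / (of_real y * Li)"
      by (simp add: algebra_simps)
    thus ?thesis using norm_triangle_ineq4 by metis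
  qed
  ultimately show ?thesis using b[OF Li] by linarith
qed

theorem lemma4p5:
  fixes f :: "int poly" and n s h \<kappa> i :: nat and \<alpha> :: "nat \<Rightarrow> complex"
    and x0 y0 :: int and xp yp m :: "int \<Rightarrow> int \<Rightarrow> int" and sel :: "nat \<Rightarrow> int \<times> int"
    and R Y :: real and A X :: "(int \<times> int) set" and Xi :: "nat \<Rightarrow> (int \<times> int) set"
  assumes deg: "n = degree f" and n3: "n \<ge> 3"
    and c0: "coeff f 0 \<noteq> 0"
    and irr: "irreducible (map_poly rat_of_int f)"
    and s_def: "s = card {k. coeff f k \<noteq> 0} - 1"
    and roots: "map_poly complex_of_int f = smult (of_int (lead_coeff f)) (\<Prod>j\<in>{1..n}. [:- \<alpha> j, 1:])"
    and h1: "h \<ge> 1" and kappa: "\<kappa> > 1"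
    and R_def: "R = real n powr (800 * (ln (real n))\<^sup>2)"
    and hbound: "real h \<le> cmod (form_disc (lead_coeff f) n \<alpha>) powr (1 / (2 * (real n - 1) * (2 + 1 / real \<kappa>)))
                   / ((3 * R) powr (real n / 2) * real (n * s) ^ (2 * s + n))"
    and Y_def: "Y = exp 6 * real s * real (n * s) powr (2 * real s / real n) * real h powr (1 / (real \<kappa> * real n))"
    and sol0: "is_solution f h x0 y0" and y0nn: "0 \<le> y0" and y0Y: "real_of_int y0 \<le> Y"
    and y0min: "\<forall>x y. is_solution f h x y \<and> 0 \<le> y \<longrightarrow> y0 \<le> y"
    and idx: "\<forall>j\<in>{1..n}. cmod (Lf (\<alpha> 1) x0 y0) \<le> cmod (Lf (\<alpha> j) x0 y0)"
    and A_def: "A = {(x0, y0)} \<union> {(x, y). is_solution f h x y \<and> 0 < y \<and> real_of_int y \<le> Y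
                      \<and> cmod (Lf (\<alpha> 1) x y) < 1 / (2 * Y)}"
    and xpyp: "\<forall>x y. coprime x y \<longrightarrow> xp x y * y - x * yp x y = 1"
    and m_def: "\<forall>x y. coprime x y \<longrightarrow> \<bar>Re (beta (\<alpha> 1) x y (xp x y) (yp x y)) - real_of_int (m x y)\<bar> \<le> 1 / 2"
    and Xi_def: "\<forall>j. Xi j = {(x, y). is_solution f h x y \<and> (x, y) \<notin> A \<and> 1 \<le> y \<and> real_of_int y \<le> Y
                      \<and> cmod (Lf (\<alpha> j) x y) \<le> 1 / (2 * real_of_int y)}"
    and sel: "\<forall>j\<in>{1..n}. Xi j \<noteq> {} \<longrightarrow> sel j \<in> Xi j \<and> (\<forall>p\<in>Xi j. snd p \<le> snd (sel j))"
    and X_def: "X = {(x, y). is_solution f h x y \<and> (x, y) \<notin> A \<and> 1 \<le> y \<and> real_of_int y \<le> Y}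
                    - sel ` {j\<in>{1..n}. Xi j \<noteq> {}}"
    and i: "i \<in> {1..n}"
  shows "(\<Prod>(x, y)\<in>X. max 1 (cmod (beta (\<alpha> i) x y (xp x y) (yp x y) - of_int (m x y)))
           / (exp 6 * real s * real (n * s) powr (2 * real s / real n) * real h powr (1 / real n)
              * (2 * Y + 7 / 2))) \<le> 1"
  proof -
  have n1: "1 \<in> {1..n}" using n3 by simp
  show ?thesis
  proof (cases "s = 0")
    case True
    thus ?thesis by (cases "card X") simp_all
  next
    case False
    hence s1: "real s \<ge> 1" by simp
    have ns1: "real (n * s) \<ge> 1" proof -
      have "1 \<le> n * s" using False n3 by simp
      thus ?thesis by (metis of_nat_1 of_nat_le_iff)
    qed
    define C where "C = exp 6 * real s * real (n * s) powr (2 * real s / real n) * real h powr (1 / real n)"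
    have C: "C \<ge> exp 6"
    proof -
      have p1: "real (n * s) powr (2 * real s / real n) \<ge> 1" using ns1 by (simp add: ge_one_powr_ge_zero)
      have p2: "real h powr (1 / real n) \<ge> 1" using h1 by (simp add: ge_one_powr_ge_zero)
      have "exp 6 * 1 * 1 * 1 \<le> C" unfolding C_def using s1 p1 p2
        by (intro mult_mono) auto
      thus ?thesis by simp
    qed
    have e6: "exp (6::real) \<ge> 2"
      using exp_ge_add_one_self[of 6] by linarith
    show ?thesis
    proof (rule prod_le_1, clarify)
      fix x y assume xy: "(x, y) \<in> X"
      have sol: "is_solution f h x y" and nA: "(x, y) \<notin> A" and y1: "1 \<le> y" and yY: "real_of_int y \<le> Y"
        and nsel: "(x, y) \<notin> sel ` {j\<in>{1..n}. Xi j \<noteq> {}}"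
        using xy X_def by auto
      have cop: "coprime x y" using sol is_solution_def by auto
      have Y1: "Y \<ge> 1" using y1 yY by linarith
      have Lb: "1 / (2 * Y) \<le> cmod (Lf (\<alpha> j) x y)" if j: "j \<in> {1..n}" for j
      proof (cases "(x, y) \<in> Xi j")
        case True
        hence ne: "Xi j \<noteq> {}" by auto
        obtain u v where uv: "sel j = (u, v)" by fastforce
        have uvX: "(u, v) \<in> Xi j" and vy: "y \<le> v" using sel j ne True uv by force+
        have usol: "is_solution f h u v" and v1: "1 \<le> v" and vY: "real_of_int v \<le> Y"
          and Lu: "cmod (Lf (\<alpha> j) u v) \<le> 1 / (2 * real_of_int v)"
          using uvX Xi_def by auto
        have "(x, y) \<noteq> (u, v)" using nsel j ne uv by force
        thus ?thesis using L_gap[OF cop _ y1 v1 vy vY _ Lu] usol is_solution_def by auto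
      next
        case False
        hence "\<not> cmod (Lf (\<alpha> j) x y) \<le> 1 / (2 * real_of_int y)"
          using Xi_def sol nA y1 yY by auto
        moreover have "1 / (2 * Y) \<le> 1 / (2 * real_of_int y)" using y1 yY by (simp add: frac_le)
        ultimately show ?thesis by linarith
      qed
      have Y0: "Y > 0" using Y1 by linarith
      have Lnz: "Lf (\<alpha> j) x y \<noteq> 0" if "j \<in> {1..n}" for j
        using Lb[OF that] Y0 by (smt (verit) divide_pos_pos norm_zero)
      have y0': "y \<noteq> 0" using y1 by simp
      have xe: "xp x y * y - x * yp x y = 1" using xpyp cop by blast
      define t where "t = - (real_of_int (yp x y) / real_of_int y)"
      have tt: "- (of_int (yp x y) / of_int y) = (of_real t :: complex)" unfolding t_def by simp
      have bj: "beta (\<alpha> j) x y (xp x y) (yp x y) = of_real t - 1 / (of_int y * Lf (\<alpha> j) x y)"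
        if "j \<in> {1..n}" for j
        using beta_eq[OF xe y0' Lnz[OF that]] unfolding tt .
      have mm0: "\<bar>Re (beta (\<alpha> 1) x y (xp x y) (yp x y)) - real_of_int (m x y)\<bar> \<le> 1/2"
        using m_def cop by blast
      have mm: "\<bar>Re (of_real t - 1 / (of_real (real_of_int y) * Lf (\<alpha> 1) x y)) - real_of_int (m x y)\<bar> \<le> 1/2"
        using mm0 unfolding bj[OF n1] of_real_of_int_eq .
      have bnd: "cmod (beta (\<alpha> i) x y (xp x y) (yp x y) - of_int (m x y)) \<le> 1/2 + 4 * Y"
        using beta_bound[of "real_of_int y" Y "Lf (\<alpha> 1) x y" "Lf (\<alpha> i) x y" t "real_of_int (m x y)"]
          y1 yY Lb[OF n1] Lb[OF i] mm unfolding bj[OF i] of_real_of_int_eq by simp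
      have den: "1/2 + 4 * Y \<le> C * (2 * Y + 7 / 2)" and denpos: "C * (2 * Y + 7 / 2) > 0"
      proof -
        have "2 * (2 * Y + 7/2) \<le> C * (2 * Y + 7 / 2)" using C e6 Y0 by (intro mult_right_mono) auto
        thus "1/2 + 4 * Y \<le> C * (2 * Y + 7 / 2)" by (simp add: algebra_simps)
        show "C * (2 * Y + 7 / 2) > 0" using C e6 Y0 by (intro mult_pos_pos) auto
      qed
      have "max 1 (cmod (beta (\<alpha> i) x y (xp x y) (yp x y) - of_int (m x y))) \<le> C * (2 * Y + 7 / 2)"
        using bnd den Y1 by (simp add: max_def)
      thus "0 \<le> max 1 (cmod (beta (\<alpha> i) x y (xp x y) (yp x y) - of_int (m x y)))
           / (exp 6 * real s * real (n * s) powr (2 * real s / real n) * real h powr (1 / real n)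
              * (2 * Y + 7 / 2)) \<and> max 1 (cmod (beta (\<alpha> i) x y (xp x y) (yp x y) - of_int (m x y)))
           / (exp 6 * real s * real (n * s) powr (2 * real s / real n) * real h powr (1 / real n)
              * (2 * Y + 7 / 2)) \<le> 1"
        using denpos unfolding C_def[symmetric] by (simp add: divide_simps)
    qed
  qed
qed

end
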